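(* For all integers $k\geq 1$ and $n\geq 3$, $\chi_i(C_{3k}\Box C_n)\leq 6$.
   Context: For a graph $G$, an incidence is a pair $(v,e)$ with $v\in V(G)$, $e\in E(G)$ and $v$ incident with $e$. Two incidences $(v,e)$ and $(w,f)$ are adjacent if $v=w$, or $e=f$, or the edge $vw$ equals $e$ or $f$. An incidence $k$-coloring of $G$ is a map from the set of incidences of $G$ to a set of $k$ colors such that adjacent incidences receive distinct colors; the incidence chromatic number $\chi_i(G)$ is the least such $k$. $C_n$ denotes the cycle on $n$ vertices and $\Box$ the Cartesian product of graphs: $G\Box H$ has vertex set $V(G)\times V(H)$, with $(u_1,v_1)$ adjacent to $(u_2,v_2)$ iff either $u_1=u_2$ and $v_1v_2\in E(H)$, or $v_1=v_2$ and $u_1u_2\in E(G)$. *)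

theory Defs
  imports Main
begin

definition cycle_V :: "nat \<Rightarrow> nat set" where
  "cycle_V n = {0..<n}"

definition cycle_E :: "nat \<Rightarrow> nat set set" where
  "cycle_E n = {{i, (i + 1) mod n} | i. i < n}"

definition cart_V :: "'a set \<Rightarrow> 'b set \<Rightarrow> ('a \<times> 'b) set" where
  "cart_V V1 V2 = V1 \<times> V2"

definition cart_E :: "'a set \<Rightarrow> 'a set set \<Rightarrow> 'b set \<Rightarrow> 'b set set \<Rightarrow> ('a \<times> 'b) set set" where
  "cart_E V1 E1 V2 E2 =
     {{(u1, v), (u2, v)} | u1 u2 v. {u1, u2} \<in> E1 \<and> v \<in> V2}
   \<union> {{(u, v1), (u, v2)} | u v1 v2. u \<in> V1 \<and> {v1, v2} \<in> E2}"

definition incidences :: "'a set \<Rightarrow> 'a set set \<Rightarrow> ('a \<times> 'a set) set" where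
  "incidences V E = {(v, e). v \<in> V \<and> e \<in> E \<and> v \<in> e}"

definition inc_adjacent :: "'a \<times> 'a set \<Rightarrow> 'a \<times> 'a set \<Rightarrow> bool" where
  "inc_adjacent i j = (case i of (v, e) \<Rightarrow> case j of (w, f) \<Rightarrow>
      v = w \<or> e = f \<or> e = {v, w} \<or> f = {v, w})"

definition incidence_coloring :: "'a set \<Rightarrow> 'a set set \<Rightarrow> nat \<Rightarrow> ('a \<times> 'a set \<Rightarrow> nat) \<Rightarrow> bool" where
  "incidence_coloring V E k c =
     ((\<forall>i \<in> incidences V E. c i < k) \<and>
      (\<forall>i \<in> incidences V E. \<forall>j \<in> incidences V E.
          i \<noteq> j \<and> inc_adjacent i j \<longrightarrow> c i \<noteq> c j))"

definition incidence_chromatic_number :: "'a set \<Rightarrow> 'a set set \<Rightarrow> nat" where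
  "incidence_chromatic_number V E = (LEAST k. \<exists>c. incidence_coloring V E k c)"

end

theory Submission
  imports Defs
begin

definition Hc :: "nat \<Rightarrow> nat \<Rightarrow> nat \<Rightarrow> nat" where
 "Hc s a d = [[[1,5],[4,1],[5,4]],[[2,3],[0,2],[3,0]],[[5,4],[1,5],[4,1]],[[0,2],[3,4],[2,5]],[[1,0],[4,3],[5,2]]] ! s ! a ! d"
definition Uc :: "nat \<Rightarrow> nat \<Rightarrow> nat \<Rightarrow> nat" where
 "Uc s t a = [[[0,0,0],[0,3,2],[0,0,0],[0,0,0],[0,0,0]],[[0,0,0],[0,0,0],[1,4,5],[0,0,0],[0,0,0]],[[3,0,3],[0,0,0],[0,0,0],[3,2,0],[0,0,0]],[[4,5,1],[0,0,0],[0,0,0],[0,0,0],[4,5,1]],[[3,2,0],[0,0,0],[0,0,0],[0,0,0],[0,0,0]]] ! s ! t ! a"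
definition Dc :: "nat \<Rightarrow> nat \<Rightarrow> nat \<Rightarrow> nat" where
 "Dc s t a = [[[0,0,0],[0,0,0],[2,2,0],[3,2,0],[2,0,3]],[[4,5,1],[0,0,0],[0,0,0],[0,0,0],[0,0,0]],[[0,0,0],[0,3,2],[0,0,0],[0,0,0],[0,0,0]],[[0,0,0],[0,0,0],[1,0,3],[0,0,0],[0,0,0]],[[0,0,0],[0,0,0],[0,0,0],[5,1,4],[0,0,0]]] ! s ! t ! a"

definition Tset :: "(nat \<times> nat \<times> nat) set" where
 "Tset = {(2,0,1),(0,1,2),(1,2,0),(1,2,3),(2,3,0),(3,0,1),(2,3,4),(3,4,0),(4,0,1)}"
definition st :: "nat \<Rightarrow> nat \<Rightarrow> nat" where
 "st n j = (if j < n - n mod 3 then j mod 3 else 3 + (j - (n - n mod 3)))"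

lemma m3a: "0 < (j::nat) \<Longrightarrow> (j - 1) mod 3 = (j mod 3 + 2) mod 3"
proof -
  assume "0 < j"
  have "(j mod 3 + 2) mod 3 = (j + 2) mod 3" by (rule mod_add_left_eq)
  also have "j + 2 = (j - 1) + 3" using \<open>0 < j\<close> by simp
  also have "((j - 1) + 3) mod 3 = (j - 1) mod 3" by (simp only: mod_add_self2)
  finally show ?thesis by simp
qed
lemma m3b: "Suc (j::nat) mod 3 = (j mod 3 + 1) mod 3" by (simp add: mod_Suc_eq)
lemma m3c: "(b::nat) \<ge> 1 \<Longrightarrow> (3*b - 1) mod 3 = 2"
proof -
  assume "b \<ge> 1"
  then have "3*b - 1 = 2 + 3*(b-1)" by simp
  then have "(3*b - 1) mod 3 = (2 + 3*(b-1)) mod 3" by simp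
  also have "\<dots> = 2 mod 3" by (simp only: mod_mult_self2)
  finally show ?thesis by simp
qed
lemma m3d: "(b::nat) \<ge> 1 \<Longrightarrow> (3*b - 2) mod 3 = 1"
proof -
  assume "b \<ge> 1"
  then have "3*b - 2 = 1 + 3*(b-1)" by simp
  then have "(3*b - 2) mod 3 = (1 + 3*(b-1)) mod 3" by simp
  also have "\<dots> = 1 mod 3" by (simp only: mod_mult_self2)
  finally show ?thesis by simp
qed
lemma triple:
  assumes "j < n" "n \<ge> 3"
  shows "(st n ((j+n-1) mod n), st n j, st n (Suc j mod n)) \<in> Tset"
proof -
  define b where "b = n div 3"
  define r where "r = n mod 3"
  have n: "n = 3*b + r" "r < 3" "b \<ge> 1" using assms(2) unfolding b_def r_def by auto
  have N0: "n - n mod 3 = 3*b" using n r_def by simp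
  have st1: "st n i = i mod 3" if "i < 3*b" for i using that unfolding st_def N0 by simp
  have st2: "st n i = 3 + (i - 3*b)" if "i \<ge> 3*b" for i using that unfolding st_def N0 by simp
  have r3: "r = 0 \<or> r = 1 \<or> r = 2" using n by auto
  consider "j = 0" | "j = n - 1" "j > 0" | "0 < j" "j < n - 1" using assms by linarith
  then show ?thesis
  proof cases
    case 1
    then have e1: "(j+n-1) mod n = n - 1" "Suc j mod n = 1" using assms by auto
    have a: "st n 0 = 0" "st n 1 = 1" using st1[of 0] st1[of 1] n(3) by simp_all
    from r3 show ?thesis
    proof (elim disjE)
      assume "r = 0" then have "n - 1 = 3*b - 1" using n(1) by simp
      then have "st n (n-1) = 2" using n(3) m3c[of b] st1[of "3*b-1"] by simp
      then show ?thesis unfolding e1 unfolding 1 a by (simp add: Tset_def)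
    next
      assume "r = 1" then have "n - 1 = 3*b" using n(1) by simp
      then have "st n (n-1) = 3" using st2[of "3*b"] by simp
      then show ?thesis unfolding e1 unfolding 1 a by (simp add: Tset_def)
    next
      assume "r = 2" then have "n - 1 = 3*b+1" using n(1) by simp
      then have "st n (n-1) = 4" using st2[of "3*b+1"] by simp
      then show ?thesis unfolding e1 unfolding 1 a by (simp add: Tset_def)
    qed
  next
    case 2
    have jj: "j + n - 1 = (n - 2) + n" using 2 assms by simp
    have "(j+n-1) mod n = (n - 2 + n) mod n" by (simp only: jj)
    also have "\<dots> = (n - 2) mod n" by (simp only: mod_add_self2)
    also have "\<dots> = n - 2" using assms by simp
    finally have e1: "(j+n-1) mod n = n - 2" "Suc j mod n = 0" using assms 2 by simp_all
    have a: "st n 0 = 0" using st1[of 0] n(3) by simp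
    from r3 show ?thesis
    proof (elim disjE)
      assume "r = 0" then have "n - 1 = 3*b - 1" "n - 2 = 3*b - 2" using n(1) by simp_all
      then have "st n (n-1) = 2" "st n (n-2) = 1" using n(3) m3c[of b] m3d[of b] st1[of "3*b-1"] st1[of "3*b-2"] by simp_all
      then show ?thesis unfolding e1 unfolding 2(1) a by (simp add: Tset_def)
    next
      assume "r = 1" then have "n - 1 = 3*b" "n - 2 = 3*b - 1" using n(1) by simp_all
      then have "st n (n-1) = 3" "st n (n-2) = 2" using n(3) m3c[of b] st1[of "3*b-1"] st2[of "3*b"] by simp_all
      then show ?thesis unfolding e1 unfolding 2(1) a by (simp add: Tset_def)
    next
      assume "r = 2" then have "n - 1 = 3*b+1" "n - 2 = 3*b" using n(1) by simp_all
      then have "st n (n-1) = 4" "st n (n-2) = 3" using st2[of "3*b+1"] st2[of "3*b"] by simp_all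
      then show ?thesis unfolding e1 unfolding 2(1) a by (simp add: Tset_def)
    qed
  next
    case 3
    have jj: "j + n - 1 = (j - 1) + n" using 3 by simp
    have "(j+n-1) mod n = (j - 1 + n) mod n" by (simp only: jj)
    also have "\<dots> = (j - 1) mod n" by (simp only: mod_add_self2)
    also have "\<dots> = j - 1" using assms by simp
    finally have e1: "(j+n-1) mod n = j - 1" "Suc j mod n = Suc j" using assms 3 by simp_all
    consider "Suc j < 3*b" | "Suc j = 3*b" | "j = 3*b" using 3 n by linarith
    then show ?thesis
    proof cases
      case 1
      then have eqs: "st n (j-1) = (j mod 3 + 2) mod 3" "st n j = j mod 3" "st n (Suc j) = (j mod 3 + 1) mod 3"
        using 3 1 st1[of "j-1"] less_imp_diff_less[of j "3*b" 1] st1[of j] st1[of "Suc j"] m3a[of j] m3b[of j] by simp_all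
      have "j mod 3 = 0 \<or> j mod 3 = 1 \<or> j mod 3 = 2" by auto
      then show ?thesis unfolding e1 eqs by (elim disjE) (simp_all add: Tset_def)
    next
      case 2
      then have jb: "j = 3*b - 1" "j - 1 = 3*b - 2" by simp_all
      from 2 have "st n (j-1) = 1" "st n j = 2" "st n (Suc j) = 3"
        using 2 n(3) m3c[of b] m3d[of b] st1[of "3*b-2"] st1[of "3*b-1"] st2[of "Suc j"]
        unfolding jb(2) unfolding jb(1) by simp_all
      then show ?thesis unfolding e1 by (simp add: Tset_def)
    next
      case 4: 3
      then have jb: "j - 1 = 3*b - 1" by simp
      from 4 have "st n (j-1) = 2" "st n j = 3" "st n (Suc j) = 4"
        using 4 n(3) m3c[of b] st1[of "3*b-1"] st2[of j] st2[of "Suc j"] unfolding jb by simp_all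
      then show ?thesis unfolding e1 by (simp add: Tset_def)
    qed
  qed
qed
lemma tab:
  assumes "(p,s,q) \<in> Tset" "a < 3"
  shows "distinct [Hc s a 1, Hc s a 0, Uc s q a, Dc s p a] \<and>
         set [Hc s a 1, Hc s a 0, Uc s q a, Dc s p a] \<inter>
         set [Hc s ((a+1) mod 3) 0, Hc s ((a+2) mod 3) 1, Uc p s a, Dc q s a] = {} \<and>
         Hc s a 1 < 6 \<and> Hc s a 0 < 6 \<and> Uc s q a < 6 \<and> Dc s p a < 6"
proof -
  have "a = 0 \<or> a = 1 \<or> a = 2" using assms(2) by auto
  then show ?thesis using assms(1)
    by (auto simp: Tset_def Hc_def Uc_def Dc_def)
qed


lemma modpred: "0 < (i::nat) \<Longrightarrow> i < m \<Longrightarrow> (i + m - 1) mod m = i - 1"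
proof -
  assume h: "0 < i" "i < m"
  have e: "i + m - 1 = (i - 1) + m" using h by simp
  have "(i + m - 1) mod m = ((i - 1) + m) mod m" by (simp only: e)
  also have "\<dots> = (i - 1) mod m" by (simp only: mod_add_self2)
  also have "\<dots> = i - 1" using h by simp
  finally show ?thesis .
qed

lemma A1: "(m::nat) \<ge> 3 \<Longrightarrow> i < m \<Longrightarrow> (Suc i mod m + m - 1) mod m = i"
proof -
  assume h: "m \<ge> 3" "i < m"
  show ?thesis
  proof (cases "Suc i = m")
    case True then show ?thesis using h by simp
  next
    case False
    then have "Suc i mod m = Suc i" using h by simp
    moreover have "(Suc i + m - 1) mod m = i" using modpred[of "Suc i" m] h False by simp
    ultimately show ?thesis by simp
  qed
qed

lemma A2: "(m::nat) \<ge> 3 \<Longrightarrow> i < m \<Longrightarrow> Suc ((i + m - 1) mod m) mod m = i"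
proof -
  assume h: "m \<ge> 3" "i < m"
  show ?thesis
  proof (cases "i = 0")
    case True then show ?thesis using h by simp
  next
    case False
    then have "(i + m - 1) mod m = i - 1" using h modpred by simp
    then show ?thesis using h False by simp
  qed
qed

lemma A3: "(m::nat) \<ge> 3 \<Longrightarrow> i < m \<Longrightarrow> Suc i mod m \<noteq> i"
  by (cases "Suc i = m") auto

lemma A4: "(m::nat) \<ge> 3 \<Longrightarrow> i < m \<Longrightarrow> (i + m - 1) mod m \<noteq> i"
proof
  assume h: "m \<ge> 3" "i < m" "(i + m - 1) mod m = i"
  then have "Suc i mod m = i" using A2[OF h(1,2)] by simp
  then show False using A3 h by blast
qed

lemma A5: "(m::nat) \<ge> 3 \<Longrightarrow> i < m \<Longrightarrow> Suc i mod m \<noteq> (i + m - 1) mod m"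
proof
  assume h: "m \<ge> 3" "i < m" and e: "Suc i mod m = (i + m - 1) mod m"
  show False
  proof (cases "Suc i = m")
    case True
    then have "(i + m - 1) mod m = i - 1" using h modpred[of i m] by simp
    then show False using e True h by simp
  next
    case False
    then have s: "Suc i mod m = Suc i" using h by simp
    show False
    proof (cases "i = 0")
      case True then show False using e s h by simp
    next
      case False
      then have "(i + m - 1) mod m = i - 1" using h modpred by simp
      then show False using e s by simp
    qed
  qed
qed

lemma A6: "(m::nat) \<ge> 3 \<Longrightarrow> i < m \<Longrightarrow> Suc (Suc i mod m) mod m \<noteq> i"
proof
  assume h: "m \<ge> 3" "i < m" and e: "Suc (Suc i mod m) mod m = i"
  have "Suc i mod m < m" using h by simp
  then have "(Suc (Suc i mod m) mod m + m - 1) mod m = Suc i mod m" using A1 h by blast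
  then have "(i + m - 1) mod m = Suc i mod m" using e by simp
  then show False using A5 h by metis
qed

lemma M1: "(m::nat) \<ge> 3 \<Longrightarrow> 3 dvd m \<Longrightarrow> i < m \<Longrightarrow> (Suc i mod m) mod 3 = (i mod 3 + 1) mod 3"
proof -
  assume h: "m \<ge> 3" "3 dvd m" "i < m"
  show ?thesis
  proof (cases "Suc i = m")
    case True
    obtain c where c: "m = 3*c" using h by blast
    then have "c \<ge> 1" using h by simp
    have "i = 3*c - 1" using True c by simp
    then have "i mod 3 = 2" using m3c \<open>c \<ge> 1\<close> by simp
    then show ?thesis using True by simp
  next
    case False
    then have "Suc i mod m = Suc i" using h by simp
    then show ?thesis using m3b by simp
  qed
qed

lemma M2: "(m::nat) \<ge> 3 \<Longrightarrow> 3 dvd m \<Longrightarrow> i < m \<Longrightarrow> ((i + m - 1) mod m) mod 3 = (i mod 3 + 2) mod 3"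
proof -
  assume h: "m \<ge> 3" "3 dvd m" "i < m"
  show ?thesis
  proof (cases "i = 0")
    case True
    obtain c where c: "m = 3*c" using h by blast
    then have "c \<ge> 1" using h by simp
    have "(i + m - 1) mod m = 3*c - 1" using True c h by simp
    then show ?thesis using m3c \<open>c \<ge> 1\<close> True by simp
  next
    case False
    then have "(i + m - 1) mod m = i - 1" using h modpred by simp
    then show ?thesis using m3a False by simp
  qed
qed

definition acol :: "nat \<Rightarrow> nat \<Rightarrow> nat \<times> nat \<Rightarrow> nat \<times> nat \<Rightarrow> nat" where
  "acol m n v w = (if snd w = snd v then
       (if fst w = Suc (fst v) mod m then Hc (st n (snd v)) (fst v mod 3) 1 else Hc (st n (snd v)) (fst v mod 3) 0)
     else (if snd w = Suc (snd v) mod n then Uc (st n (snd v)) (st n (snd w)) (fst v mod 3)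
           else Dc (st n (snd v)) (st n (snd w)) (fst v mod 3)))"

definition nbrs :: "nat \<Rightarrow> nat \<Rightarrow> nat \<times> nat \<Rightarrow> (nat \<times> nat) set" where
  "nbrs m n v = {(Suc (fst v) mod m, snd v), ((fst v + m - 1) mod m, snd v),
                 (fst v, Suc (snd v) mod n), (fst v, (snd v + n - 1) mod n)}"

lemma vertex_local:
  assumes m: "m \<ge> 3" "3 dvd m" and n: "n \<ge> 3" and v: "i < m" "j < n"
  defines "R \<equiv> (Suc i mod m, j)" and "L \<equiv> ((i + m - 1) mod m, j)"
      and "U \<equiv> (i, Suc j mod n)" and "D \<equiv> (i, (j + n - 1) mod n)"
  shows "distinct [acol m n (i,j) R, acol m n (i,j) L, acol m n (i,j) U, acol m n (i,j) D] \<and>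
         set [acol m n (i,j) R, acol m n (i,j) L, acol m n (i,j) U, acol m n (i,j) D] \<inter>
         set [acol m n R (i,j), acol m n L (i,j), acol m n D (i,j), acol m n U (i,j)] = {} \<and>
         acol m n (i,j) R < 6 \<and> acol m n (i,j) L < 6 \<and> acol m n (i,j) U < 6 \<and> acol m n (i,j) D < 6"
proof -
  define a where "a = i mod 3"
  define s where "s = st n j"
  define p where "p = st n ((j + n - 1) mod n)"
  define q where "q = st n (Suc j mod n)"
  have T: "(p,s,q) \<in> Tset" unfolding p_def s_def q_def using triple v(2) n by blast
  have a3: "a < 3" unfolding a_def by simp
  have A5': "(i + m - 1) mod m \<noteq> Suc i mod m" using A5[OF m(1) v(1)] by metis
  have A5n: "(j + n - 1) mod n \<noteq> Suc j mod n" using A5[OF n v(2)] by metis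
  have A3n: "Suc j mod n \<noteq> j" using A3[OF n v(2)] .
  have A4n: "(j + n - 1) mod n \<noteq> j" using A4[OF n v(2)] .
  have A6m: "i \<noteq> Suc (Suc i mod m) mod m" using A6[OF m(1) v(1)] by metis
  have A6n: "j \<noteq> Suc (Suc j mod n) mod n" using A6[OF n v(2)] by metis
  have A2m: "i = Suc ((i + m - 1) mod m) mod m" using A2[OF m(1) v(1)] by metis
  have A2n: "j = Suc ((j + n - 1) mod n) mod n" using A2[OF n v(2)] by metis
  have o1: "acol m n (i,j) R = Hc s a 1" unfolding R_def acol_def s_def a_def by simp
  have o2: "acol m n (i,j) L = Hc s a 0" unfolding L_def acol_def s_def a_def using A5' by simp
  have o3: "acol m n (i,j) U = Uc s q a" unfolding U_def acol_def s_def a_def q_def using A3n by simp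
  have o4: "acol m n (i,j) D = Dc s p a" unfolding D_def acol_def s_def a_def p_def
    using A4n A5n by simp
  have "acol m n R (i,j) = Hc s ((Suc i mod m) mod 3) 0" unfolding R_def acol_def s_def
    using A6m by simp
  also have "(Suc i mod m) mod 3 = (a+1) mod 3" unfolding a_def by (rule M1[OF m v(1)])
  finally have i1: "acol m n R (i,j) = Hc s ((a+1) mod 3) 0" .
  have "acol m n L (i,j) = Hc s (((i + m - 1) mod m) mod 3) 1" unfolding L_def acol_def s_def
    using A2m by simp
  also have "((i + m - 1) mod m) mod 3 = (a+2) mod 3" unfolding a_def by (rule M2[OF m v(1)])
  finally have i2: "acol m n L (i,j) = Hc s ((a+2) mod 3) 1" .
  have i3: "acol m n U (i,j) = Dc q s a" unfolding U_def acol_def s_def a_def q_def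
    using A3n A6n by simp
  have i4: "acol m n D (i,j) = Uc p s a" unfolding D_def acol_def s_def a_def p_def
    using A4n A2n by simp
  show ?thesis unfolding o1 o2 o3 o4 i1 i2 i3 i4 by (rule tab[OF T a3])
qed


lemma nbrs_cases:
  assumes "w \<in> nbrs m n (i,j)"
  shows "w = (Suc i mod m, j) \<or> w = ((i + m - 1) mod m, j) \<or> w = (i, Suc j mod n) \<or> w = (i, (j + n - 1) mod n)"
  using assms unfolding nbrs_def by simp

lemma nbrs_ne:
  assumes "m \<ge> 3" "n \<ge> 3" "fst v < m" "snd v < n" "w \<in> nbrs m n v"
  shows "w \<noteq> v"
proof -
  obtain i j where v: "v = (i,j)" by (cases v)
  have ij: "i < m" "j < n" using assms(3,4) v by auto
  note a = A3[OF assms(1) ij(1)] A4[OF assms(1) ij(1)] A3[OF assms(2) ij(2)] A4[OF assms(2) ij(2)]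
  from nbrs_cases[OF assms(5)[unfolded v]] show ?thesis unfolding v using a
    by (elim disjE) simp_all
qed

lemma nbrs_sym:
  assumes "m \<ge> 3" "n \<ge> 3" "fst v < m" "snd v < n" "w \<in> nbrs m n v"
  shows "v \<in> nbrs m n w"
proof -
  obtain i j where v: "v = (i,j)" by (cases v)
  have ij: "i < m" "j < n" using assms(3,4) v by auto
  note a = A1[OF assms(1) ij(1)] A2[OF assms(1) ij(1)] A1[OF assms(2) ij(2)] A2[OF assms(2) ij(2)]
  from nbrs_cases[OF assms(5)[unfolded v]] show ?thesis
  proof (elim disjE)
    assume "w = (Suc i mod m, j)" then show ?thesis using a(1) by (simp add: v nbrs_def)
  next
    assume "w = ((i + m - 1) mod m, j)" then show ?thesis using a(2) by (simp add: v nbrs_def)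
  next
    assume "w = (i, Suc j mod n)" then show ?thesis using a(3) by (simp add: v nbrs_def)
  next
    assume "w = (i, (j + n - 1) mod n)" then show ?thesis using a(4) by (simp add: v nbrs_def)
  qed
qed

lemma nbrs_range:
  assumes "m \<ge> 3" "n \<ge> 3" "fst v < m" "snd v < n" "w \<in> nbrs m n v"
  shows "fst w < m \<and> snd w < n"
proof -
  obtain i j where v: "v = (i,j)" by (cases v)
  have ij: "i < m" "j < n" using assms(3,4) v by auto
  have "0 < m" "0 < n" using assms(1,2) by auto
  from nbrs_cases[OF assms(5)[unfolded v]] show ?thesis using ij \<open>0 < m\<close> \<open>0 < n\<close>
    by (elim disjE) simp_all
qed

lemma out_distinct:
  assumes "(m::nat) \<ge> 3" "3 dvd m" "n \<ge> 3" "fst v < m" "snd v < n"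
    "w \<in> nbrs m n v" "w' \<in> nbrs m n v" "w \<noteq> w'"
  shows "acol m n v w \<noteq> acol m n v w'"
proof -
  obtain i j where v: "v = (i,j)" by (cases v)
  have "i < m" "j < n" using assms(4,5) v by auto
  note L = vertex_local[OF assms(1,2,3) this, THEN conjunct1]
  have "w \<in> set [(Suc i mod m, j), ((i + m - 1) mod m, j), (i, Suc j mod n), (i, (j + n - 1) mod n)]"
       "w' \<in> set [(Suc i mod m, j), ((i + m - 1) mod m, j), (i, Suc j mod n), (i, (j + n - 1) mod n)]"
    using assms(6,7) v by (simp_all add: nbrs_def)
  then show ?thesis using L assms(8) unfolding v set_simps insert_iff empty_iff distinct.simps
    by (elim disjE FalseE) simp_all
qed

lemma disj_ne: "set xs \<inter> set ys = {} \<Longrightarrow> a \<in> set xs \<Longrightarrow> b \<in> set ys \<Longrightarrow> a \<noteq> b"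
  by blast

lemma in_out:
  assumes "(m::nat) \<ge> 3" "3 dvd m" "n \<ge> 3" "fst w < m" "snd w < n"
    "u \<in> nbrs m n w" "x \<in> nbrs m n w"
  shows "acol m n u w \<noteq> acol m n w x"
proof -
  obtain i j where v: "w = (i,j)" by (cases w)
  have "i < m" "j < n" using assms(4,5) v by auto
  note L = vertex_local[OF assms(1,2,3) this, THEN conjunct2, THEN conjunct1]
  have "u \<in> set [(Suc i mod m, j), ((i + m - 1) mod m, j), (i, Suc j mod n), (i, (j + n - 1) mod n)]"
       "x \<in> set [(Suc i mod m, j), ((i + m - 1) mod m, j), (i, Suc j mod n), (i, (j + n - 1) mod n)]"
    using assms(6,7) v by (simp_all add: nbrs_def)
  then have "acol m n u (i,j) \<in> set [acol m n (Suc i mod m, j) (i,j), acol m n ((i + m - 1) mod m, j) (i,j),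
       acol m n (i, (j + n - 1) mod n) (i,j), acol m n (i, Suc j mod n) (i,j)]"
    "acol m n (i,j) x \<in> set [acol m n (i,j) (Suc i mod m, j), acol m n (i,j) ((i + m - 1) mod m, j),
       acol m n (i,j) (i, Suc j mod n), acol m n (i,j) (i, (j + n - 1) mod n)]"
    unfolding set_simps insert_iff empty_iff by (elim disjE FalseE; simp)+
  then show ?thesis using disj_ne[OF L] unfolding v by metis
qed

lemma out_lt6:
  assumes "(m::nat) \<ge> 3" "3 dvd m" "n \<ge> 3" "fst v < m" "snd v < n"
    "w \<in> nbrs m n v"
  shows "acol m n v w < 6"
proof -
  obtain i j where v: "v = (i,j)" by (cases v)
  have "i < m" "j < n" using assms(4,5) v by auto
  note L = vertex_local[OF assms(1,2,3) this, THEN conjunct2, THEN conjunct2]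
  have "w \<in> set [(Suc i mod m, j), ((i + m - 1) mod m, j), (i, Suc j mod n), (i, (j + n - 1) mod n)]"
    using assms(6) v by (simp_all add: nbrs_def)
  then show ?thesis using L unfolding v set_simps insert_iff empty_iff by (elim disjE FalseE) simp_all
qed

lemma inc_char:
  assumes "(m::nat) \<ge> 3" "n \<ge> 3"
    "(v, e) \<in> incidences (cart_V (cycle_V m) (cycle_V n)) (cart_E (cycle_V m) (cycle_E m) (cycle_V n) (cycle_E n))"
  shows "fst v < m \<and> snd v < n \<and> (\<exists>w. e = {v, w} \<and> w \<in> nbrs m n v)"
proof -
  have vV: "fst v < m" "snd v < n" and ve: "v \<in> e"
    and eE: "e \<in> cart_E (cycle_V m) (cycle_E m) (cycle_V n) (cycle_E n)"
    using assms(3) by (auto simp: incidences_def cart_V_def cycle_V_def)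
  have "\<exists>w. e = {v, w} \<and> w \<in> nbrs m n v"
    using eE unfolding cart_E_def
  proof (elim UnE CollectE exE conjE)
    fix u1 u2 y assume e: "e = {(u1, y), (u2, y)}" and u: "{u1, u2} \<in> cycle_E m" and y: "y \<in> cycle_V n"
    obtain i where i: "{u1, u2} = {i, Suc i mod m}" "i < m" using u unfolding cycle_E_def by auto
    have yn: "y < n" using y by (simp add: cycle_V_def)
    have c: "(u1 = i \<and> u2 = Suc i mod m) \<or> (u1 = Suc i mod m \<and> u2 = i)" using i(1) by (auto simp: doubleton_eq_iff)
    have a1: "(Suc i mod m + m - 1) mod m = i" using A1 assms(1) i(2) by blast
    show ?thesis
    proof (cases "v = (i, y)")
      case True
      then show ?thesis using c e a1 by (auto simp: nbrs_def insert_commute)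
    next
      case False
      then have "v = (Suc i mod m, y)" using c e ve by auto
      then show ?thesis using c e a1 False by (auto simp: nbrs_def insert_commute)
    qed
  next
    fix u v1 v2 assume e: "e = {(u, v1), (u, v2)}" and u: "u \<in> cycle_V m" and vv: "{v1, v2} \<in> cycle_E n"
    obtain j where j: "{v1, v2} = {j, Suc j mod n}" "j < n" using vv unfolding cycle_E_def by auto
    have c: "(v1 = j \<and> v2 = Suc j mod n) \<or> (v1 = Suc j mod n \<and> v2 = j)" using j(1) by (auto simp: doubleton_eq_iff)
    have a1: "(Suc j mod n + n - 1) mod n = j" using A1 assms(2) j(2) by blast
    show ?thesis
    proof (cases "v = (u, j)")
      case True
      then show ?thesis using c e a1 by (auto simp: nbrs_def insert_commute)
    next
      case False
      then have "v = (u, Suc j mod n)" using c e ve by auto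
      then show ?thesis using c e a1 False by (auto simp: nbrs_def insert_commute)
    qed
  qed
  then show ?thesis using vV by blast
qed

lemma the_other: "(THE w'. {v, w} = {v, w'}) = w"
  by (rule the_equality) (auto simp: doubleton_eq_iff)

theorem lemma1:
  fixes k n :: nat
  assumes "k \<ge> 1" and "n \<ge> 3"
  shows "incidence_chromatic_number
           (cart_V (cycle_V (3 * k)) (cycle_V n))
           (cart_E (cycle_V (3 * k)) (cycle_E (3 * k)) (cycle_V n) (cycle_E n)) \<le> 6"
proof -
  define m where "m = 3 * k"
  have m3: "m \<ge> 3" "3 dvd m" using assms(1) unfolding m_def by auto
  note n3 = assms(2)
  define V where "V = cart_V (cycle_V m) (cycle_V n)"
  define E where "E = cart_E (cycle_V m) (cycle_E m) (cycle_V n) (cycle_E n)"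
  define c where "c = (\<lambda>(v::nat\<times>nat, e::(nat\<times>nat) set). acol m n v (THE w. e = {v, w}))"
  have IC: "fst v < m \<and> snd v < n \<and> (\<exists>w. e = {v, w} \<and> w \<in> nbrs m n v)" if "(v, e) \<in> incidences V E" for v e
    using inc_char[OF m3(1) n3] that unfolding V_def E_def by blast
  have cv: "c (v, {v, w}) = acol m n v w" for v w unfolding c_def by (simp add: the_other)
  have "incidence_coloring V E 6 c"
    unfolding incidence_coloring_def
  proof (intro conjI ballI impI)
    fix x assume x: "x \<in> incidences V E"
    obtain v e where ve: "x = (v, e)" by (cases x)
    obtain w where w: "e = {v, w}" "w \<in> nbrs m n v" and vr: "fst v < m" "snd v < n"
      using IC x ve by blast
    show "c x < 6" unfolding ve w cv using out_lt6[OF m3 n3 vr w(2)] .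
  next
    fix x y assume x: "x \<in> incidences V E" and y: "y \<in> incidences V E" and xy: "x \<noteq> y \<and> inc_adjacent x y"
    obtain v e where ve: "x = (v, e)" by (cases x)
    obtain w where w: "e = {v, w}" "w \<in> nbrs m n v" and vr: "fst v < m" "snd v < n"
      using IC x ve by blast
    obtain v' e' where ve': "y = (v', e')" by (cases y)
    obtain w' where w': "e' = {v', w'}" "w' \<in> nbrs m n v'" and vr': "fst v' < m" "snd v' < n"
      using IC y ve' by blast
    have wv: "w \<noteq> v" using nbrs_ne[OF m3(1) n3 vr w(2)] .
    have wv': "w' \<noteq> v'" using nbrs_ne[OF m3(1) n3 vr' w'(2)] .
    have wr: "fst w < m" "snd w < n" using nbrs_range[OF m3(1) n3 vr w(2)] by auto
    have wr': "fst w' < m" "snd w' < n" using nbrs_range[OF m3(1) n3 vr' w'(2)] by auto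
    have vw: "v \<in> nbrs m n w" using nbrs_sym[OF m3(1) n3 vr w(2)] .
    have vw': "v' \<in> nbrs m n w'" using nbrs_sym[OF m3(1) n3 vr' w'(2)] .
    have ne: "(v, {v, w}) \<noteq> (v', {v', w'})" using xy ve ve' w w' by simp
    have adj: "v = v' \<or> {v, w} = {v', w'} \<or> {v, w} = {v, v'} \<or> {v', w'} = {v, v'}"
      using xy ve ve' w w' by (simp add: inc_adjacent_def)
    have "acol m n v w \<noteq> acol m n v' w'"
    proof -
      consider "v = v'" | "v \<noteq> v'" "{v, w} = {v', w'}" | "v \<noteq> v'" "{v, w} = {v, v'}" | "v \<noteq> v'" "{v', w'} = {v, v'}"
        using adj by blast
      then show ?thesis
      proof cases
        case 1
        then have "w \<noteq> w'" using ne by auto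
        then show ?thesis using out_distinct[OF m3 n3 vr w(2)] w'(2) 1 by simp
      next
        case 2
        then have "v' = w" "w' = v" by (auto simp: doubleton_eq_iff)
        then show ?thesis using in_out[OF m3 n3 wr vw vw] by simp
      next
        case 3
        then have "v' = w" using wv by (auto simp: doubleton_eq_iff)
        then show ?thesis using in_out[OF m3 n3 wr vw] w'(2) by simp
      next
        case 4
        then have "w' = v" using wv' by (auto simp: doubleton_eq_iff)
        then show ?thesis using in_out[OF m3 n3 vr, of v' w] w(2) vw' by metis
      qed
    qed
    then show "c x \<noteq> c y" unfolding ve ve' w w' cv .
  qed
  then have "incidence_chromatic_number V E \<le> 6"
    unfolding incidence_chromatic_number_def by (auto intro: Least_le)
  then show ?thesis unfolding V_def E_def m_def .
qed

end
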